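(* Let $0<a<b$ and $m\ge1$ be fixed, and let $\{H_n\}$ be a sequence of $n\times n$ Hermitian $m$-banded matrices with $\sigma(H_n)\subset[-b,-a]\cup[a,b]$ for all $n$. Let $P_n$ be the orthogonal spectral projector of $H_n$ onto the span of eigenvectors with negative eigenvalues. Then for every $\xi$ with $1<\xi<\frac{b+a}{b-a}$ there is a constant $C>0$ independent of $n$, $i$, $j$ such that $$|[P_n]_{ij}|\le C\,\xi^{-\frac{|i-j|}{2m}}\quad\text{for all } i,j \text{ and all } n.$$
   Context: A matrix $A$ is $m$-banded if $A_{ij}=0$ whenever $|i-j|>m$. *)

theory Defs
  imports "Jordan_Normal_Form.Char_Poly" "Jordan_Normal_Form.VS_Connect"
begin

definition hermitian_mat :: "nat \<Rightarrow> complex mat \<Rightarrow> bool" where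
  "hermitian_mat n A \<longleftrightarrow> A \<in> carrier_mat n n \<and>
     (\<forall>i<n. \<forall>j<n. A $$ (i,j) = cnj (A $$ (j,i)))"

definition banded :: "nat \<Rightarrow> complex mat \<Rightarrow> bool" where
  "banded m A \<longleftrightarrow> (\<forall>i<dim_row A. \<forall>j<dim_col A.
     real m < \<bar>real i - real j\<bar> \<longrightarrow> A $$ (i,j) = 0)"

definition neg_eigenspace :: "nat \<Rightarrow> complex mat \<Rightarrow> complex vec set" where
  "neg_eigenspace n H = module.span class_ring (module_vec TYPE(complex) n)
     {v. \<exists>k. eigenvector H v k \<and> k \<in> \<real> \<and> Re k < 0}"

definition neg_spectral_projector :: "nat \<Rightarrow> complex mat \<Rightarrow> complex mat \<Rightarrow> bool" where
  "neg_spectral_projector n H P \<longleftrightarrow> P \<in> carrier_mat n n \<and> P * P = P \<and> hermitian_mat n P \<and>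
     {P *\<^sub>v v | v. v \<in> carrier_vec n} = neg_eigenspace n H"

end

theory Submission
  imports Defs "Jordan_Normal_Form.Spectral_Radius" "Jordan_Normal_Form.Schur_Decomposition"
    "HOL-Analysis.Generalised_Binomial_Theorem" "HOL-Analysis.Complex_Transcendental"
begin


fun chebs :: "nat \<Rightarrow> real \<Rightarrow> real" where
  "chebs 0 x = 1"
| "chebs (Suc 0) x = x"
| "chebs (Suc (Suc k)) x = 2 * x * chebs (Suc k) x - chebs k x"

lemma chebs_cos2: "chebs k (cos \<theta>) = cos (real k * \<theta>) \<and> chebs (Suc k) (cos \<theta>) = cos (real (Suc k) * \<theta>)"
proof (induction k)
  case 0 then show ?case by simp
next
  case (Suc k)
  have "cos (real (Suc (Suc k)) * \<theta>) = cos (real (Suc k) * \<theta> + \<theta>)"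
    by (simp add: algebra_simps)
  also have "\<dots> = 2 * cos \<theta> * cos (real (Suc k) * \<theta>) - cos (real (Suc k) * \<theta> - \<theta>)"
    by (simp add: cos_add cos_diff)
  also have "real (Suc k) * \<theta> - \<theta> = real k * \<theta>" by (simp add: algebra_simps)
  finally show ?case using Suc by simp
qed

lemma chebs_cos: "chebs k (cos \<theta>) = cos (real k * \<theta>)"
  using chebs_cos2 by blast

lemma chebs_bound: assumes "-1 \<le> t" "t \<le> 1" shows "\<bar>chebs k t\<bar> \<le> 1"
proof -
  have "chebs k t = chebs k (cos (arccos t))" using assms by simp
  also have "\<dots> = cos (real k * arccos t)" by (rule chebs_cos)
  finally show ?thesis by simp
qed

definition gam :: "nat \<Rightarrow> real" where
  "gam i = (-1)^i * ((-1/2) gchoose i)"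

lemma gam_Suc: "gam (Suc k) = gam k * ((real k + 1/2) / (real k + 1))"
proof -
  have "(-1/2::real) * ((-1/2) gchoose k) = of_nat k * ((-1/2) gchoose k) + of_nat (Suc k) * ((-1/2) gchoose (Suc k))"
    by (rule gbinomial_mult_1)
  hence "(real k + 1) * ((-1/2::real) gchoose (Suc k)) = - (real k + 1/2) * ((-1/2) gchoose k)"
    by (simp add: algebra_simps)
  hence "((-1/2::real) gchoose (Suc k)) = - ((-1/2) gchoose k) * ((real k + 1/2) / (real k + 1))"
    by (simp add: field_simps)
  thus ?thesis unfolding gam_def by simp
qed

lemma gam_bounds: "0 \<le> gam k \<and> gam k \<le> 1"
proof (induction k)
  case 0 then show ?case by (simp add: gam_def)
next
  case (Suc k)
  have f: "0 \<le> (real k + 1/2) / (real k + 1)" "(real k + 1/2) / (real k + 1) \<le> 1"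
    by (auto simp: field_simps)
  have "gam k * ((real k + 1/2) / (real k + 1)) \<le> 1 * 1"
    by (rule mult_mono) (use Suc f in auto)
  thus ?case unfolding gam_Suc using Suc f by simp
qed

lemma binom_half: fixes z :: complex assumes "norm z < 1"
  shows "(\<lambda>n. of_real (gam n) * z^n) sums ((1 - z) powr (-1/2))"
proof -
  have "norm (-z) < 1" using assms by simp
  from gen_binomial_complex[OF this, of "-1/2"]
  have s: "(\<lambda>n. ((-1/2::complex) gchoose n) * (-z)^n) sums (1 + - z) powr (-1/2)" .
  have eq: "((-1/2::complex) gchoose n) * (-z)^n = of_real (gam n) * z^n" for n
  proof -
    have "((-1/2::complex) gchoose n) = of_real ((-1/2::real) gchoose n)"
      by (simp add: gbinomial_prod_rev)
    moreover have "(-z)^n = (-1)^n * z^n" by (rule power_minus)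
    moreover have "complex_of_real (gam n) = (-1)^n * of_real ((-1/2::real) gchoose n)"
      unfolding gam_def by simp
    ultimately show ?thesis by (simp only: mult_ac)
  qed
  have "(1 + - z) = 1 - z" by simp
  with s have "(\<lambda>n. ((-1/2::complex) gchoose n) * (-z)^n) sums (1 - z) powr (-1/2)" by simp
  thus ?thesis by (simp only: eq)
qed

lemma norm_gam_pow: fixes z :: complex assumes "norm z = u"
  shows "norm (complex_of_real (gam i) * z^i) \<le> u^i"
proof -
  have "norm (complex_of_real (gam i) * z^i) = gam i * u^i"
    using assms gam_bounds[of i] by (simp add: norm_mult norm_power)
  also have "\<dots> \<le> 1 * u^i" using gam_bounds[of i] assms
    by (intro mult_right_mono) auto
  finally show ?thesis by simp
qed

lemma cos_abs_mult: "cos (x * \<theta>) = cos (\<bar>x\<bar> * (\<theta>::real))"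
proof (cases "x \<ge> 0")
  case False
  hence "\<bar>x\<bar> * \<theta> = - (x * \<theta>)" by simp
  thus ?thesis by (simp only: cos_minus)
qed simp

lemma key_series:
  assumes u: "0 \<le> u" "u < 1" and t: "-1 \<le> t" "t \<le> 1"
  shows "(\<lambda>k. \<Sum>i\<le>k. gam i * gam (k-i) * u^k * chebs (nat \<bar>2 * int i - int k\<bar>) t)
           sums (1 / sqrt (1 - 2*u*t + u^2))"
proof -
  define \<theta> where "\<theta> = arccos t"
  have ct: "cos \<theta> = t" using t \<theta>_def by simp
  define z where "z = complex_of_real u * cis \<theta>"
  have nz: "norm z = u" using u by (simp add: z_def norm_mult)
  have nzc: "norm (cnj z) = u" using nz by simp
  define a where "a = (\<lambda>i. complex_of_real (gam i) * z^i)"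
  define b where "b = (\<lambda>i. complex_of_real (gam i) * (cnj z)^i)"
  have sa: "a sums ((1 - z) powr (-1/2))" unfolding a_def by (rule binom_half) (use nz u in simp)
  have sb: "b sums ((1 - cnj z) powr (-1/2))" unfolding b_def by (rule binom_half) (use nzc u in simp)
  have geo: "summable (\<lambda>k. u^k)" using u by (intro summable_geometric) simp
  have na: "summable (\<lambda>k. norm (a k))"
    by (rule summable_comparison_test[OF _ geo]) (use norm_gam_pow[OF nz] in \<open>simp add: a_def\<close>)
  have nb: "summable (\<lambda>k. norm (b k))"
    by (rule summable_comparison_test[OF _ geo]) (use norm_gam_pow[OF nzc] in \<open>simp add: b_def\<close>)
  define w where "w = (1 - z) powr (-1/2)"
  have cw: "cnj w = (1 - cnj z) powr (-1/2)"
  proof -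
    have "Re (1 - z) > 0" using u nz complex_Re_le_cmod[of z] by simp
    hence "cnj w = cnj (1 - z) powr cnj (-1/2)" unfolding w_def by (intro cnj_powr) auto
    thus ?thesis by simp
  qed
  have "suminf a = w" using sa w_def sums_unique by metis
  moreover have "suminf b = cnj w" using sb cw sums_unique by metis
  ultimately have "w * cnj w = suminf a * suminf b" by simp
  with Cauchy_product_sums[OF na nb]
  have cp: "(\<lambda>k. \<Sum>i\<le>k. a i * b (k-i)) sums (w * cnj w)" by simp
  from sums_Re[OF cp]
  have re: "(\<lambda>k. Re (\<Sum>i\<le>k. a i * b (k-i))) sums Re (w * cnj w)" .
  have trm: "Re (\<Sum>i\<le>k. a i * b (k-i)) = (\<Sum>i\<le>k. gam i * gam (k-i) * u^k * chebs (nat \<bar>2 * int i - int k\<bar>) t)" for k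
  proof -
    have "Re (a i * b (k-i)) = gam i * gam (k-i) * u^k * chebs (nat \<bar>2 * int i - int k\<bar>) t"
      if i: "i \<le> k" for i
    proof -
      have "z^i * (cnj z)^(k-i) = complex_of_real (u^k) * cis ((real i - real (k-i)) * \<theta>)"
      proof -
        have "z^i * (cnj z)^(k-i) = complex_of_real (u^i * u^(k-i)) * (cis (real i * \<theta>) * cis (- (real (k-i) * \<theta>)))"
        proof -
          have d1: "cis \<theta> ^ i = cis (real i * \<theta>)" by (rule Complex.DeMoivre)
          have d2: "cis (-\<theta>) ^ (k-i) = cis (- (real (k-i) * \<theta>))"
            using Complex.DeMoivre[of "-\<theta>" "k-i"] by simp
          show ?thesis unfolding z_def by (simp add: power_mult_distrib cis_cnj d1 d2)
        qed
        also have "u^i * u^(k-i) = u^k" using i by (simp flip: power_add)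
        also have "cis (real i * \<theta>) * cis (- (real (k-i) * \<theta>)) = cis ((real i - real (k-i)) * \<theta>)"
          by (simp add: cis_mult algebra_simps)
        finally show ?thesis .
      qed
      note zz = this
      have "a i * b (k-i) = complex_of_real (gam i * gam (k-i)) * (z^i * (cnj z)^(k-i))"
        unfolding a_def b_def by (simp add: mult_ac)
      also have "\<dots> = complex_of_real (gam i * gam (k-i) * u^k) * cis ((real i - real (k-i)) * \<theta>)"
        unfolding zz by (simp add: mult_ac)
      finally have "Re (a i * b (k-i)) = gam i * gam (k-i) * u^k * cos ((real i - real (k-i)) * \<theta>)"
        by simp
      hence "Re (a i * b (k-i)) = gam i * gam (k-i) * (u^k * cos ((real i - real (k-i)) * \<theta>))"
        by (simp add: mult_ac)
      also have "cos ((real i - real (k-i)) * \<theta>) = cos (real (nat \<bar>2 * int i - int k\<bar>) * \<theta>)"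
      proof -
        have h: "real (nat \<bar>2 * int i - int k\<bar>) = \<bar>real i - real (k-i)\<bar>" using i by auto
        show ?thesis unfolding h by (rule cos_abs_mult)
      qed
      also have "\<dots> = chebs (nat \<bar>2 * int i - int k\<bar>) t" using chebs_cos ct by metis
      finally show ?thesis by simp
    qed
    thus ?thesis by (simp add: Re_sum)
  qed
  have val: "Re (w * cnj w) = 1 / sqrt (1 - 2*u*t + u^2)"
  proof -
    have "Re (w * cnj w) = (cmod w)^2" by (simp add: complex_norm_square[symmetric])
    also have "cmod w = cmod (1 - z) powr (-1/2)" unfolding w_def
      by (subst norm_powr_real_powr') auto
    also have "cmod (1 - z) = sqrt (1 - 2*u*t + u^2)"
    proof -
      have "(cmod (1 - z))^2 = (1 - u * cos \<theta>)^2 + (u * sin \<theta>)^2"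
        unfolding z_def cmod_power2 by simp
      also have "\<dots> = 1 - 2*u*t + u^2 * ((sin \<theta>)^2 + (cos \<theta>)^2)" using ct
        by (simp add: power2_eq_square algebra_simps)
      finally have "(cmod (1 - z))^2 = 1 - 2*u*t + u^2" by simp
      thus ?thesis by (metis norm_ge_zero real_sqrt_abs abs_of_nonneg real_sqrt_power)
    qed
    also have "(sqrt (1 - 2*u*t + u^2) powr (-1/2))^2 = sqrt (1 - 2*u*t + u^2) powr (-1)"
      by (simp add: power2_eq_square flip: powr_add)
    finally have e: "Re (w * cnj w) = sqrt (1 - 2*u*t + u^2) powr (-1)" .
    have "t * u \<le> 1 * u" using u t by (intro mult_right_mono) auto
    hence "1 - 2*u*t + u^2 \<ge> (1 - u)^2" using u t
      by (simp add: power2_eq_square algebra_simps)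
    moreover have "(1 - u)^2 > 0" using u by simp
    ultimately have "1 - 2*u*t + u^2 > 0" by linarith
    hence "sqrt (1 - 2*u*t + u^2) > 0" by simp
    thus ?thesis unfolding e by (simp add: powr_minus_divide)
  qed
  show ?thesis using re unfolding trm val .
qed

lemma lin_geo: assumes "0 \<le> q" "q < 1" shows "real (Suc k) * q^k \<le> 1 / (1 - q)"
proof -
  have "real (Suc k) * q^k = (\<Sum>j<Suc k. q^k)" by simp
  also have "\<dots> \<le> (\<Sum>j<Suc k. q^j)"
    by (intro sum_mono power_decreasing) (use assms in auto)
  also have "\<dots> \<le> (\<Sum>j. q^j)"
    by (rule sum_le_suminf) (use assms in \<open>auto intro: summable_geometric\<close>)
  also have "\<dots> = 1 / (1 - q)" using assms by (intro suminf_geometric) auto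
  finally show ?thesis .
qed

lemma tail_bound:
  fixes f :: "nat \<Rightarrow> real"
  assumes f: "f sums L" and fb: "\<And>k. \<bar>f k\<bar> \<le> B * \<rho>^k" and r: "0 \<le> \<rho>" "\<rho> < 1"
  shows "\<bar>L - (\<Sum>k<K. f k)\<bar> \<le> B * \<rho>^K / (1 - \<rho>)"
proof -
  have s1: "(\<lambda>i. f (i + K)) sums (L - (\<Sum>k<K. f k))" by (rule sums_split_initial_segment[OF f])
  have g: "(\<lambda>i. \<rho>^i) sums (1 / (1 - \<rho>))" using r by (intro geometric_sums) auto
  have s2: "(\<lambda>i. B * \<rho>^K * \<rho>^i) sums (B * \<rho>^K * (1 / (1 - \<rho>)))" by (rule sums_mult[OF g])
  have "\<bar>L - (\<Sum>k<K. f k)\<bar> = norm (\<Sum>i. f (i + K))" using sums_unique[OF s1] by simp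
  also have "\<dots> \<le> (\<Sum>i. B * \<rho>^K * \<rho>^i)"
  proof (rule norm_suminf_le)
    fix i show "norm (f (i + K)) \<le> B * \<rho>^K * \<rho>^i" using fb[of "i+K"] by (simp add: power_add mult_ac)
  qed (use s2 in \<open>simp add: sums_iff\<close>)
  also have "\<dots> = B * \<rho>^K / (1 - \<rho>)" using sums_unique[OF s2] by simp
  finally show ?thesis .
qed

definition uu :: "real \<Rightarrow> real \<Rightarrow> real" where "uu a b = (b - a) / (b + a)"
definition c0 :: "real \<Rightarrow> real \<Rightarrow> real" where "c0 a b = ((a + b) / 2)^2"
definition tt :: "real \<Rightarrow> real \<Rightarrow> real \<Rightarrow> real" where
  "tt a b r = ((1 + (uu a b)^2) - r^2 / c0 a b) / (2 * uu a b)"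
definition sterm :: "real \<Rightarrow> real \<Rightarrow> real \<Rightarrow> nat \<Rightarrow> real" where
  "sterm a b r k = (\<Sum>i\<le>k. gam i * gam (k-i) * (uu a b)^k * chebs (nat \<bar>2 * int i - int k\<bar>) (tt a b r))"
definition sapprox :: "real \<Rightarrow> real \<Rightarrow> nat \<Rightarrow> real \<Rightarrow> real" where
  "sapprox a b K r = r / sqrt (c0 a b) * (\<Sum>k<K. sterm a b r k)"

lemma tt_facts: assumes ab: "0 < a" "a < b" and r: "a \<le> \<bar>r\<bar>" "\<bar>r\<bar> \<le> b"
  shows "-1 \<le> tt a b r" "tt a b r \<le> 1" "1 - 2 * uu a b * tt a b r + (uu a b)^2 = r^2 / c0 a b"
    "0 < uu a b" "uu a b < 1" "0 < c0 a b"
proof -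
  show u0: "0 < uu a b" "uu a b < 1" using ab by (auto simp: uu_def field_simps)
  show c: "0 < c0 a b" using ab by (simp add: c0_def)
  show "1 - 2 * uu a b * tt a b r + (uu a b)^2 = r^2 / c0 a b"
    unfolding tt_def using u0 by (simp add: field_simps)
  have "(1 - uu a b) * ((a+b)/2) = a" using ab by (simp add: uu_def field_simps)
  hence ca: "c0 a b * (1 - uu a b)^2 = a^2" unfolding c0_def
    by (metis power_mult_distrib mult.commute)
  have "(1 + uu a b) * ((a+b)/2) = b" using ab by (simp add: uu_def field_simps)
  hence cb: "c0 a b * (1 + uu a b)^2 = b^2" unfolding c0_def
    by (metis power_mult_distrib mult.commute)
  have ra: "a^2 \<le> r^2" using r ab by (metis abs_le_square_iff abs_of_pos)
  have rb: "r^2 \<le> b^2" using r ab by (metis abs_le_square_iff abs_of_pos less_trans)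
  have "(1 - uu a b)^2 \<le> r^2 / c0 a b" using ca ra c by (simp add: field_simps)
  thus "tt a b r \<le> 1" unfolding tt_def using u0 by (simp add: field_simps power2_eq_square)
  have "r^2 / c0 a b \<le> (1 + uu a b)^2" using cb rb c by (simp add: field_simps)
  thus "-1 \<le> tt a b r" unfolding tt_def using u0 by (simp add: field_simps power2_eq_square)
qed

lemma sign_series: assumes ab: "0 < a" "a < b" and r: "a \<le> \<bar>r\<bar>" "\<bar>r\<bar> \<le> b"
  shows "(\<lambda>k. r / sqrt (c0 a b) * sterm a b r k) sums sgn r"
proof -
  note tf = tt_facts[OF ab r]
  have "sterm a b r sums (1 / sqrt (1 - 2 * uu a b * tt a b r + (uu a b)^2))"
    unfolding sterm_def[abs_def] by (rule key_series) (use tf in auto)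
  hence "(\<lambda>k. r / sqrt (c0 a b) * sterm a b r k) sums (r / sqrt (c0 a b) * (1 / sqrt (r^2 / c0 a b)))"
    unfolding tf(3) by (rule sums_mult)
  also have "r / sqrt (c0 a b) * (1 / sqrt (r^2 / c0 a b)) = sgn r"
  proof -
    have "r \<noteq> 0" using r ab by auto
    thus ?thesis using tf(6) by (simp add: real_sqrt_divide sgn_real_def field_simps abs_if)
  qed
  finally show ?thesis .
qed

lemma sterm_bound: assumes ab: "0 < a" "a < b" and r: "a \<le> \<bar>r\<bar>" "\<bar>r\<bar> \<le> b"
  shows "\<bar>sterm a b r k\<bar> \<le> real (Suc k) * (uu a b)^k"
proof -
  note tf = tt_facts[OF ab r]
  have "\<bar>sterm a b r k\<bar> \<le> (\<Sum>i\<le>k. \<bar>gam i * gam (k-i) * (uu a b)^k * chebs (nat \<bar>2 * int i - int k\<bar>) (tt a b r)\<bar>)"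
    unfolding sterm_def by (rule sum_abs)
  also have "\<dots> \<le> (\<Sum>i\<le>k. (uu a b)^k)"
  proof (rule sum_mono)
    fix i
    have g: "\<bar>gam i * gam (k-i)\<bar> \<le> 1" using gam_bounds[of i] gam_bounds[of "k-i"]
      by (simp add: abs_mult mult_le_one)
    have c: "\<bar>chebs (nat \<bar>2 * int i - int k\<bar>) (tt a b r)\<bar> \<le> 1" by (rule chebs_bound) (use tf in auto)
    have "\<bar>gam i * gam (k-i) * (uu a b)^k * chebs (nat \<bar>2 * int i - int k\<bar>) (tt a b r)\<bar>
        = \<bar>gam i * gam (k-i)\<bar> * \<bar>chebs (nat \<bar>2 * int i - int k\<bar>) (tt a b r)\<bar> * (uu a b)^k"
      using tf by (simp add: abs_mult)
    also have "\<dots> \<le> 1 * 1 * (uu a b)^k" using g c tf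
      by (intro mult_right_mono mult_mono) auto
    finally show "\<bar>gam i * gam (k-i) * (uu a b)^k * chebs (nat \<bar>2 * int i - int k\<bar>) (tt a b r)\<bar> \<le> (uu a b)^k" by simp
  qed
  also have "\<dots> = real (Suc k) * (uu a b)^k" by simp
  finally show ?thesis .
qed

lemma sapprox_bound:
  assumes ab: "0 < a" "a < b" and xi: "1 < \<xi>" "\<xi> < (b + a) / (b - a)"
  shows "\<exists>E. \<forall>K r. a \<le> \<bar>r\<bar> \<longrightarrow> \<bar>r\<bar> \<le> b \<longrightarrow> \<bar>sgn r - sapprox a b K r\<bar> \<le> E * (1 / \<xi>)^K"
proof -
  define u where "u = uu a b"
  define q where "q = u * \<xi>"
  have u: "0 < u" "u < 1" using ab by (auto simp: u_def uu_def field_simps)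
  have q: "0 \<le> q" "q < 1"
  proof -
    show "0 \<le> q" using u xi by (simp add: q_def)
    have "b - a > 0" "b + a > 0" using ab by auto
    hence "\<xi> * (b - a) < b + a" using xi by (simp add: field_simps)
    thus "q < 1" unfolding q_def u_def uu_def using ab by (simp add: field_simps)
  qed
  define \<rho> where "\<rho> = 1 / \<xi>"
  have rho: "0 \<le> \<rho>" "\<rho> < 1" using xi by (auto simp: \<rho>_def)
  define E where "E = b / sqrt (c0 a b) * (1 / (1 - q)) / (1 - \<rho>)"
  show ?thesis
  proof (intro exI[of _ E] allI impI)
    fix K r assume r: "a \<le> \<bar>r\<bar>" "\<bar>r\<bar> \<le> b"
    note tf = tt_facts[OF ab r]
    have fb: "\<bar>r / sqrt (c0 a b) * sterm a b r k\<bar> \<le> (b / sqrt (c0 a b) * (1 / (1 - q))) * \<rho>^k" for k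
    proof -
      have "\<bar>r / sqrt (c0 a b) * sterm a b r k\<bar> = \<bar>r\<bar> / sqrt (c0 a b) * \<bar>sterm a b r k\<bar>"
        using tf by (simp add: abs_mult)
      also have "\<dots> \<le> b / sqrt (c0 a b) * (real (Suc k) * u^k)"
        using sterm_bound[OF ab r, of k] r tf unfolding u_def
        by (intro mult_mono divide_right_mono) auto
      also have "real (Suc k) * u^k = (real (Suc k) * q^k) * \<rho>^k"
        using xi by (simp add: q_def \<rho>_def power_mult_distrib field_simps)
      also have "\<dots> \<le> (1 / (1 - q)) * \<rho>^k"
        by (intro mult_right_mono lin_geo q) (use rho in auto)
      finally show ?thesis using tf ab by (simp add: mult_left_mono mult_ac divide_le_cancel)
    qed
    have "\<bar>sgn r - (\<Sum>k<K. r / sqrt (c0 a b) * sterm a b r k)\<bar> \<le> (b / sqrt (c0 a b) * (1 / (1 - q))) * \<rho>^K / (1 - \<rho>)"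
      by (rule tail_bound[OF sign_series[OF ab r] fb rho])
    thus "\<bar>sgn r - sapprox a b K r\<bar> \<le> E * (1 / \<xi>)^K"
      unfolding sapprox_def E_def \<rho>_def by (simp add: sum_distrib_left mult_ac)
  qed
qed



definition adj :: "complex mat \<Rightarrow> complex mat" where
  "adj A = Matrix.mat (dim_col A) (dim_row A) (\<lambda>(i,j). cnj (A $$ (j,i)))"

lemma adj_carrier[simp]: "dim_row (adj A) = dim_col A" "dim_col (adj A) = dim_row A"
  by (auto simp: adj_def)

lemma adj_index[simp]: "i < dim_col A \<Longrightarrow> j < dim_row A \<Longrightarrow> adj A $$ (i,j) = cnj (A $$ (j,i))"
  by (auto simp: adj_def)

lemma adj_carrier_mat[simp]: "A \<in> carrier_mat n m \<Longrightarrow> adj A \<in> carrier_mat m n"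
  by (auto simp: adj_def)

lemma mult_index_sum: assumes "i < dim_row A" "j < dim_col B" "dim_col A = dim_row B"
  shows "(A * B) $$ (i,j) = (\<Sum>k<dim_col A. A $$ (i,k) * B $$ (k,j))"
  using assms by (auto simp: scalar_prod_def atLeast0LessThan intro!: sum.cong)

lemma mult_vec_index_sum: assumes "i < dim_row A" "dim_col A = dim_vec v"
  shows "(A *\<^sub>v v) $ i = (\<Sum>k<dim_col A. A $$ (i,k) * v $ k)"
  using assms by (auto simp: scalar_prod_def atLeast0LessThan intro!: sum.cong)

lemma adj_mult: assumes "A \<in> carrier_mat n m" "B \<in> carrier_mat m p"
  shows "adj (A * B) = adj B * adj A"
proof (rule eq_matI)
  fix i j assume ij: "i < dim_row (adj B * adj A)" "j < dim_col (adj B * adj A)"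
  show "adj (A * B) $$ (i, j) = (adj B * adj A) $$ (i, j)"
  proof -
    have "adj (A * B) $$ (i, j) = cnj ((A*B) $$ (j,i))" using ij assms by simp
    also have "(A*B) $$ (j,i) = (\<Sum>k<m. A $$ (j,k) * B $$ (k,i))"
      using ij assms by (subst mult_index_sum) auto
    also have "(adj B * adj A) $$ (i, j) = (\<Sum>k<m. adj B $$ (i,k) * adj A $$ (k,j))"
      using ij assms by (subst mult_index_sum) auto
    ultimately show ?thesis using ij assms by (simp add: mult.commute)
  qed
qed (use assms in auto)

lemma adj_adj[simp]: "adj (adj A) = A"
  by (rule eq_matI) auto

lemma cscalar_sum: "dim_vec w = n \<Longrightarrow> v \<bullet>c w = (\<Sum>i<n. v $ i * cnj (w $ i))"
  by (auto simp: scalar_prod_def atLeast0LessThan)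

definition nrm2 :: "complex Matrix.vec \<Rightarrow> real" where
  "nrm2 w = (\<Sum>i<dim_vec w. (cmod (w$i))^2)"

definition normalize :: "complex Matrix.vec \<Rightarrow> complex Matrix.vec" where
  "normalize w = of_real (1 / sqrt (nrm2 w)) \<cdot>\<^sub>v w"

lemma cscalar_self: "w \<bullet>c w = of_real (nrm2 w)"
proof -
  have "w \<bullet>c w = (\<Sum>i<dim_vec w. w $ i * cnj (w $ i))" by (rule cscalar_sum) simp
  also have "\<dots> = (\<Sum>i<dim_vec w. complex_of_real ((cmod (w$i))^2))"
    by (rule sum.cong[OF refl], rule complex_norm_square[symmetric])
  finally show ?thesis by (simp add: nrm2_def del: of_real_power)
qed

lemma nrm2_nonneg: "nrm2 w \<ge> 0" unfolding nrm2_def by (auto intro: sum_nonneg)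

lemma normalize_dim[simp]: "dim_vec (normalize w) = dim_vec w"
  by (simp add: normalize_def)

lemma normalize_carrier[simp]: "w \<in> carrier_vec n \<Longrightarrow> normalize w \<in> carrier_vec n"
  by (simp add: normalize_def)

lemma normalize_cscalar: assumes "dim_vec v = dim_vec w"
  shows "normalize v \<bullet>c normalize w = of_real (1/(sqrt (nrm2 v) * sqrt (nrm2 w))) * (v \<bullet>c w)"
  using assms
  by (simp add: cscalar_sum[OF refl] normalize_def sum_distrib_left algebra_simps)

lemma normalize_unit: assumes "w \<bullet>c w \<noteq> 0" shows "normalize w \<bullet>c normalize w = 1"
proof -
  have "nrm2 w \<noteq> 0" using assms by (simp add: cscalar_self)
  hence p: "nrm2 w > 0" using nrm2_nonneg[of w] by linarith
  show ?thesis unfolding normalize_cscalar[OF refl] cscalar_self[of w] using p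
    by (simp flip: of_real_mult)
qed

lemma normalize_id: assumes "w \<bullet>c w = 1" shows "normalize w = w"
proof -
  have "nrm2 w = 1" using assms by (simp add: cscalar_self)
  thus ?thesis by (simp add: normalize_def)
qed

lemma herm_adj: assumes "H \<in> carrier_mat n n" "adj H = H" "i < n" "j < n"
  shows "H $$ (i,j) = cnj (H $$ (j,i))"
proof -
  have "adj H $$ (i,j) = cnj (H $$ (j,i))" using assms by (intro adj_index) auto
  thus ?thesis using assms(2) by simp
qed

lemma unitary_sum: assumes "U \<in> carrier_mat n n" "adj U * U = 1\<^sub>m n" "i < n" "j < n"
  shows "(\<Sum>r<n. cnj (U $$ (r,i)) * U $$ (r,j)) = (if i = j then 1 else 0)"
proof -
  have "(adj U * U) $$ (i,j) = (\<Sum>r<n. adj U $$ (i,r) * U $$ (r,j))"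
    using assms by (subst mult_index_sum) auto
  also have "\<dots> = (\<Sum>r<n. cnj (U $$ (r,i)) * U $$ (r,j))"
    using assms by (intro sum.cong) auto
  finally show ?thesis using assms by simp
qed

lemma spectral:
  fixes H :: "complex mat"
  assumes "H \<in> carrier_mat n n" "adj H = H"
  shows "\<exists>U. U \<in> carrier_mat n n \<and> adj U * U = 1\<^sub>m n \<and>
     (\<forall>k<n. \<exists>\<mu>. H *\<^sub>v col U k = \<mu> \<cdot>\<^sub>v col U k)"
  using assms
proof (induction n arbitrary: H)
  case 0
  show ?case by (intro exI[of _ "1\<^sub>m 0"]) (auto intro!: eq_matI)
next
  case (Suc n H)
  note H = Suc.prems(1) and herm = Suc.prems(2)
  define N where "N = Suc n"
  have HN: "H \<in> carrier_mat N N" using H N_def by simp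
  from spectrum_non_empty[OF H] obtain e where "e \<in> spectrum H" by auto
  then obtain v0 where ev: "eigenvector H v0 e" unfolding spectrum_def eigenvalue_def by auto
  have v0: "v0 \<in> carrier_vec N" "v0 \<noteq> 0\<^sub>v N" "H *\<^sub>v v0 = e \<cdot>\<^sub>v v0"
    using ev H unfolding eigenvector_def N_def by auto
  have "v0 \<bullet>c v0 \<noteq> 0" using v0 by simp
  define v where "v = normalize v0"
  have vc: "v \<in> carrier_vec N" using v0 v_def by simp
  have vv: "v \<bullet>c v = 1" unfolding v_def by (rule normalize_unit) fact
  have vnz: "v \<noteq> 0\<^sub>v N" using vv vc by auto
  have Hv: "H *\<^sub>v v = e \<cdot>\<^sub>v v"
    unfolding v_def normalize_def using v0 HN by (simp add: mult_mat_vec) (auto intro!: eq_vecI)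
  interpret cof_vec_space N "TYPE(complex)" .
  define b where "b = basis_completion v"
  note bc = basis_completion[OF vc vnz, folded b_def]
  obtain vs' where bv: "b = v # vs'" using bc(6,7) by (cases b) (auto simp: N_def)
  define ws where "ws = gram_schmidt N b"
  note gs = gram_schmidt_result[OF bc(2) bc(4) bc(5) ws_def]
  have hws: "hd ws = v" unfolding ws_def bv by (rule gram_schmidt_hd[OF vc])
  have lws: "length ws = N" using gs bc by simp
  define us where "us = map normalize ws"
  have lus: "length us = N" using lws us_def by simp
  have usc: "\<And>k. k < N \<Longrightarrow> us ! k \<in> carrier_vec N"
    using gs(3) lws unfolding us_def by (auto intro!: normalize_carrier simp: nth_mem subsetD)
  have uorth: "us ! i \<bullet>c us ! j = (if i = j then 1 else 0)" if "i < N" "j < N" for i j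
  proof (cases "i = j")
    case True
    have "ws ! i \<bullet>c ws ! i \<noteq> 0" using corthogonalD[OF gs(2)] that lws by auto
    thus ?thesis using True that lws unfolding us_def by (simp add: normalize_unit)
  next
    case False
    have "ws ! i \<bullet>c ws ! j = 0" using corthogonalD[OF gs(2)] that lws False by auto
    moreover have "dim_vec (ws ! i) = dim_vec (ws ! j)" using gs(3) that lws
      by (metis carrier_vecD nth_mem subsetD)
    ultimately show ?thesis using False that lws unfolding us_def
      by (simp add: normalize_cscalar)
  qed
  have us0: "us ! 0 = v" using hws lws vv unfolding us_def N_def
    by (cases ws) (auto simp: normalize_id)
  define W where "W = mat_of_cols N us"
  have W: "W \<in> carrier_mat N N" unfolding W_def using lus by auto
  have colW: "\<And>k. k < N \<Longrightarrow> col W k = us ! k" unfolding W_def using lus usc by simp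
  have Wi: "\<And>r k. r < N \<Longrightarrow> k < N \<Longrightarrow> W $$ (r,k) = us ! k $ r"
    unfolding W_def using lus by (simp add: mat_of_cols_index)
  have WW: "adj W * W = 1\<^sub>m N"
  proof (rule eq_matI)
    fix i j assume ij: "i < dim_row (1\<^sub>m N)" "j < dim_col (1\<^sub>m N)"
    have "(adj W * W) $$ (i,j) = (\<Sum>r<N. adj W $$ (i,r) * W $$ (r,j))"
      using ij W by (subst mult_index_sum) auto
    also have "\<dots> = (\<Sum>r<N. us ! j $ r * cnj (us ! i $ r))"
      using ij W by (intro sum.cong) (auto simp: Wi mult.commute)
    also have "\<dots> = us ! j \<bullet>c us ! i" using usc ij by (subst cscalar_sum) auto
    finally show "(adj W * W) $$ (i,j) = 1\<^sub>m N $$ (i,j)" using ij uorth by auto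
  qed (use W in auto)
  have WW': "W * adj W = 1\<^sub>m N"
    by (rule mat_mult_left_right_inverse[OF adj_carrier_mat[OF W] W WW])
  define A' where "A' = adj W * H * W"
  have A': "A' \<in> carrier_mat N N" unfolding A'_def using W HN by auto
  have HW: "H * W = W * A'"
  proof -
    have aW: "adj W \<in> carrier_mat N N" using W by simp
    have "W * A' = (W * (adj W * H)) * W" unfolding A'_def
      by (rule assoc_mult_mat[symmetric, OF W _ W]) (use aW HN in auto)
    also have "W * (adj W * H) = (W * adj W) * H"
      by (rule assoc_mult_mat[symmetric, OF W aW HN])
    finally have "W * A' = (W * adj W) * H * W" .
    thus ?thesis using WW' HN W by simp
  qed
  have colA'0: "col A' 0 = e \<cdot>\<^sub>v unit_vec N 0"
  proof -
    have "col A' 0 = (adj W * H) *\<^sub>v col W 0" unfolding A'_def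
      using W HN by (subst col_mult2[of _ N N]) (auto simp: N_def)
    also have "\<dots> = adj W *\<^sub>v (H *\<^sub>v v)" using W HN colW[of 0] us0 vc
      by (subst assoc_mult_mat_vec[of _ N N _ N]) (auto simp: N_def)
    also have "\<dots> = adj W *\<^sub>v (e \<cdot>\<^sub>v v)" using Hv by simp
    also have "\<dots> = e \<cdot>\<^sub>v (adj W *\<^sub>v col W 0)" using W vc colW[of 0] us0
      by (simp add: mult_mat_vec[of _ N N] N_def)
    also have "adj W *\<^sub>v col W 0 = col (adj W * W) 0" using W
      by (subst col_mult2[of _ N N]) (auto simp: N_def)
    finally show ?thesis unfolding WW by (simp add: N_def)
  qed
  have A'0: "\<And>i. i < N \<Longrightarrow> A' $$ (i,0) = (if i = 0 then e else 0)"
  proof -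
    fix i assume "i < N"
    hence "A' $$ (i,0) = col A' 0 $ i" using A' by (simp add: N_def)
    thus "A' $$ (i,0) = (if i = 0 then e else 0)" unfolding colA'0 using \<open>i < N\<close>
      by (auto simp: N_def)
  qed
  have hA': "adj A' = A'"
  proof -
    have "adj A' = adj W * adj (adj W * H)" unfolding A'_def
      using W HN by (subst adj_mult[of _ N N]) auto
    also have "adj (adj W * H) = H * W" using W HN herm by (subst adj_mult[of _ N N]) auto
    also have "adj W * (H * W) = adj W * H * W"
      by (rule assoc_mult_mat[symmetric]) (use W HN in auto)
    finally show ?thesis unfolding A'_def .
  qed
  have A'0r: "A' $$ (0,j) = 0" if "j < N" "0 < j" for j
  proof -
    have "A' $$ (0,j) = cnj (A' $$ (j,0))" by (rule herm_adj[OF A' hA']) (use that in auto)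
    thus ?thesis using A'0[OF that(1)] that by simp
  qed
  define A3 where "A3 = Matrix.mat n n (\<lambda>(i,j). A' $$ (Suc i, Suc j))"
  have A3: "A3 \<in> carrier_mat n n" unfolding A3_def by auto
  have hA3: "adj A3 = A3"
  proof (rule eq_matI)
    fix i j assume ij: "i < dim_row A3" "j < dim_col A3"
    have "A' $$ (Suc i, Suc j) = cnj (A' $$ (Suc j, Suc i))"
      by (rule herm_adj[OF A' hA']) (use ij A3 in \<open>auto simp: N_def\<close>)
    thus "adj A3 $$ (i,j) = A3 $$ (i,j)" using ij unfolding A3_def by auto
  qed (use A3 in auto)
  from Suc.IH[OF A3 hA3] obtain U3 where U3: "U3 \<in> carrier_mat n n" "adj U3 * U3 = 1\<^sub>m n"
    and U3e: "\<forall>k<n. \<exists>\<mu>. A3 *\<^sub>v col U3 k = \<mu> \<cdot>\<^sub>v col U3 k" by blast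
  define B where "B = Matrix.mat N N (\<lambda>(i,j). if i = 0 \<and> j = 0 then 1 else if i = 0 \<or> j = 0 then 0
      else U3 $$ (i - 1, j - 1))"
  have B: "B \<in> carrier_mat N N" unfolding B_def by auto
  have Bi: "\<And>i j. i < N \<Longrightarrow> j < N \<Longrightarrow> B $$ (i,j) = (if i = 0 \<and> j = 0 then 1 else if i = 0 \<or> j = 0 then 0
      else U3 $$ (i - 1, j - 1))" unfolding B_def by auto
  have BB: "adj B * B = 1\<^sub>m N"
  proof (rule eq_matI)
    fix i j assume ij: "i < dim_row (1\<^sub>m N)" "j < dim_col (1\<^sub>m N)"
    have "(adj B * B) $$ (i,j) = (\<Sum>r<N. adj B $$ (i,r) * B $$ (r,j))"
      using ij B by (subst mult_index_sum) auto
    also have "\<dots> = (\<Sum>r<N. cnj (B $$ (r,i)) * B $$ (r,j))"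
      using ij B by (intro sum.cong) auto
    also have "\<dots> = cnj (B $$ (0,i)) * B $$ (0,j) + (\<Sum>r<n. cnj (B $$ (Suc r,i)) * B $$ (Suc r,j))"
      unfolding N_def by (rule sum.lessThan_Suc_shift)
    also have "\<dots> = 1\<^sub>m N $$ (i,j)"
    proof (cases i)
      case 0
      then show ?thesis using ij by (cases j) (auto simp: Bi N_def)
    next
      case (Suc i')
      show ?thesis
      proof (cases j)
        case 0
        then show ?thesis using ij Suc by (auto simp: Bi N_def)
      next
        case (Suc j')
        have "(\<Sum>r<n. cnj (B $$ (Suc r,i)) * B $$ (Suc r,j)) = (\<Sum>r<n. cnj (U3 $$ (r,i')) * U3 $$ (r,j'))"
          using ij \<open>i = Suc i'\<close> Suc by (intro sum.cong) (auto simp: Bi N_def)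
        also have "\<dots> = (if i' = j' then 1 else 0)"
          using unitary_sum[OF U3] ij \<open>i = Suc i'\<close> Suc by (auto simp: N_def)
        finally show ?thesis using ij \<open>i = Suc i'\<close> Suc by (auto simp: Bi N_def)
      qed
    qed
    finally show "(adj B * B) $$ (i,j) = 1\<^sub>m N $$ (i,j)" .
  qed (use B in auto)
  have A'B: "\<exists>\<mu>. A' *\<^sub>v col B k = \<mu> \<cdot>\<^sub>v col B k" if k: "k < N" for k
  proof -
    have expand: "(A' *\<^sub>v col B k) $ i = A' $$ (i,0) * B $$ (0,k) + (\<Sum>r<n. A' $$ (i, Suc r) * B $$ (Suc r, k))"
      if i: "i < N" for i
    proof -
      have "(A' *\<^sub>v col B k) $ i = (\<Sum>r<N. A' $$ (i,r) * col B k $ r)"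
        using A' B i by (subst mult_vec_index_sum) auto
      also have "\<dots> = (\<Sum>r<N. A' $$ (i,r) * B $$ (r,k))"
        using B k by (intro sum.cong) auto
      also have "\<dots> = A' $$ (i,0) * B $$ (0,k) + (\<Sum>r<n. A' $$ (i, Suc r) * B $$ (Suc r, k))"
        unfolding N_def by (rule sum.lessThan_Suc_shift)
      finally show ?thesis .
    qed
    show ?thesis
    proof (cases k)
      case 0
      have "A' *\<^sub>v col B k = e \<cdot>\<^sub>v col B k"
      proof (rule eq_vecI)
        fix i assume "i < dim_vec (e \<cdot>\<^sub>v col B k)"
        hence i: "i < N" using B by simp
        show "(A' *\<^sub>v col B k) $ i = (e \<cdot>\<^sub>v col B k) $ i"
          unfolding expand[OF i] using i B 0 A'0 by (simp add: Bi N_def)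
      qed (use A' B in simp)
      thus ?thesis by blast
    next
      case (Suc k')
      from U3e k Suc obtain \<mu> where mu: "A3 *\<^sub>v col U3 k' = \<mu> \<cdot>\<^sub>v col U3 k'" by (auto simp: N_def)
      have "A' *\<^sub>v col B k = \<mu> \<cdot>\<^sub>v col B k"
      proof (rule eq_vecI)
        fix i assume "i < dim_vec (\<mu> \<cdot>\<^sub>v col B k)"
        hence i: "i < N" using B by simp
        show "(A' *\<^sub>v col B k) $ i = (\<mu> \<cdot>\<^sub>v col B k) $ i"
        proof (cases i)
          case 0
          then show ?thesis unfolding expand[OF i] using i B k Suc A'0r by (simp add: Bi N_def)
        next
          case (Suc i')
          have "(\<Sum>r<n. A' $$ (i, Suc r) * B $$ (Suc r, k)) = (\<Sum>r<n. A3 $$ (i', r) * col U3 k' $ r)"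
            using Suc \<open>k = Suc k'\<close> k i U3 by (intro sum.cong) (auto simp: Bi N_def A3_def)
          also have "\<dots> = (A3 *\<^sub>v col U3 k') $ i'"
            using A3 U3 Suc i by (subst mult_vec_index_sum) (auto simp: N_def)
          also have "\<dots> = \<mu> * U3 $$ (i', k')" unfolding mu using U3 Suc i k \<open>k = Suc k'\<close>
            by (auto simp: N_def)
          finally show ?thesis unfolding expand[OF i] using i B k Suc \<open>k = Suc k'\<close>
            by (simp add: Bi N_def)
        qed
      qed (use A' B in simp)
      thus ?thesis by blast
    qed
  qed
  define U where "U = W * B"
  have U: "U \<in> carrier_mat N N" unfolding U_def using W B by auto
  have UU: "adj U * U = 1\<^sub>m N"
  proof -
    have "adj U * U = adj B * (adj W * (W * B))" unfolding U_def using W B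
      by (simp add: adj_mult[of _ N N]) (rule assoc_mult_mat, auto)
    also have "adj W * (W * B) = (adj W * W) * B"
      by (rule assoc_mult_mat[symmetric]) (use W B in auto)
    also have "\<dots> = B" using WW B by simp
    finally show ?thesis using BB by simp
  qed
  have Ue: "\<exists>\<mu>. H *\<^sub>v col U k = \<mu> \<cdot>\<^sub>v col U k" if k: "k < N" for k
  proof -
    obtain \<mu> where mu: "A' *\<^sub>v col B k = \<mu> \<cdot>\<^sub>v col B k" using A'B[OF k] by blast
    have cU: "col U k = W *\<^sub>v col B k" unfolding U_def by (rule col_mult2[OF W B k])
    have "H *\<^sub>v col U k = (H * W) *\<^sub>v col B k" unfolding cU using HN W B k by simp
    also have "\<dots> = W *\<^sub>v (A' *\<^sub>v col B k)" unfolding HW using W A' B k by simp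
    also have "\<dots> = \<mu> \<cdot>\<^sub>v col U k" unfolding mu cU using W B k by (simp add: mult_mat_vec[of _ N N])
    finally show ?thesis by blast
  qed
  show ?case using U UU Ue unfolding N_def by blast
qed



lemma banded_I: assumes "\<And>i j. i < dim_row A \<Longrightarrow> j < dim_col A \<Longrightarrow> real p < \<bar>real i - real j\<bar> \<Longrightarrow> A $$ (i,j) = 0"
  shows "banded p A" using assms unfolding banded_def by auto

lemma banded_D: "banded p A \<Longrightarrow> i < dim_row A \<Longrightarrow> j < dim_col A \<Longrightarrow> real p < \<bar>real i - real j\<bar> \<Longrightarrow> A $$ (i,j) = 0"
  unfolding banded_def by auto

lemma banded_mono: "banded p A \<Longrightarrow> p \<le> q \<Longrightarrow> banded q A"
  unfolding banded_def by force

lemma banded_one: "banded 0 (1\<^sub>m n)"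
  by (rule banded_I) auto

lemma banded_zero: "banded p (0\<^sub>m n n)"
  by (rule banded_I) auto

lemma banded_add: assumes "A \<in> carrier_mat n n" "B \<in> carrier_mat n n" "banded p A" "banded p B"
  shows "banded p (A + B)"
  using assms unfolding banded_def by auto

lemma banded_minus: assumes "A \<in> carrier_mat n n" "B \<in> carrier_mat n n" "banded p A" "banded p B"
  shows "banded p (A - B)"
  using assms unfolding banded_def by auto

lemma banded_smult: assumes "banded p A" shows "banded p (c \<cdot>\<^sub>m A)"
  by (rule banded_I) (use assms in \<open>auto dest: banded_D\<close>)

lemma banded_mult: assumes A: "A \<in> carrier_mat n n" and B: "B \<in> carrier_mat n n"
  and bA: "banded p A" and bB: "banded q B"
  shows "banded (p + q) (A * B)"
proof (rule banded_I)
  fix i j assume i: "i < dim_row (A * B)" and j: "j < dim_col (A * B)"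
    and d: "real (p + q) < \<bar>real i - real j\<bar>"
  have "(A * B) $$ (i,j) = (\<Sum>l<n. A $$ (i,l) * B $$ (l,j))"
    using i j A B by (subst mult_index_sum) auto
  also have "\<dots> = 0"
  proof (rule sum.neutral, intro ballI)
    fix l assume l: "l \<in> {..<n}"
    show "A $$ (i,l) * B $$ (l,j) = 0"
    proof (cases "real p < \<bar>real i - real l\<bar>")
      case True
      thus ?thesis using banded_D[OF bA] i l A B by auto
    next
      case False
      hence "real q < \<bar>real l - real j\<bar>" using d by linarith
      thus ?thesis using banded_D[OF bB] j l A B by auto
    qed
  qed
  finally show "(A * B) $$ (i,j) = 0" .
qed

lemma smult_mat_vec: assumes "A \<in> carrier_mat n n" "v \<in> carrier_vec n"
  shows "(c \<cdot>\<^sub>m A) *\<^sub>v v = c \<cdot>\<^sub>v (A *\<^sub>v v)"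
proof (rule eq_vecI)
  fix i assume "i < dim_vec (c \<cdot>\<^sub>v (A *\<^sub>v v))"
  hence i: "i < n" using assms by simp
  have "((c \<cdot>\<^sub>m A) *\<^sub>v v) $ i = (\<Sum>k<n. (c \<cdot>\<^sub>m A) $$ (i,k) * v $ k)"
    using assms i by (subst mult_vec_index_sum) auto
  also have "\<dots> = c * (\<Sum>k<n. A $$ (i,k) * v $ k)"
    using assms i by (simp add: sum_distrib_left mult_ac)
  also have "(\<Sum>k<n. A $$ (i,k) * v $ k) = (A *\<^sub>v v) $ i"
    using assms i by (subst mult_vec_index_sum) auto
  finally show "((c \<cdot>\<^sub>m A) *\<^sub>v v) $ i = (c \<cdot>\<^sub>v (A *\<^sub>v v)) $ i" using assms i by simp
qed (use assms in simp)

fun chebm :: "nat \<Rightarrow> nat \<Rightarrow> complex mat \<Rightarrow> complex mat" where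
  "chebm n 0 M = 1\<^sub>m n"
| "chebm n (Suc 0) M = M"
| "chebm n (Suc (Suc k)) M = 2 \<cdot>\<^sub>m (M * chebm n (Suc k) M) - chebm n k M"

lemma chebm_carrier: "M \<in> carrier_mat n n \<Longrightarrow> chebm n k M \<in> carrier_mat n n"
  by (induction n k M rule: chebm.induct) auto

lemma chebm_eigen2: assumes M: "M \<in> carrier_mat n n" and v: "v \<in> carrier_vec n"
  and ev: "M *\<^sub>v v = complex_of_real x \<cdot>\<^sub>v v"
  shows "chebm n k M *\<^sub>v v = complex_of_real (chebs k x) \<cdot>\<^sub>v v \<and>
         chebm n (Suc k) M *\<^sub>v v = complex_of_real (chebs (Suc k) x) \<cdot>\<^sub>v v"
proof (induction k)
  case 0
  show ?case using v ev by simp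
next
  case (Suc k)
  have c1: "chebm n (Suc k) M \<in> carrier_mat n n" "chebm n k M \<in> carrier_mat n n"
    using chebm_carrier[OF M] by auto
  have "chebm n (Suc (Suc k)) M *\<^sub>v v = 2 \<cdot>\<^sub>v (M *\<^sub>v (chebm n (Suc k) M *\<^sub>v v)) - chebm n k M *\<^sub>v v"
    using M c1 v by (simp add: minus_mult_distrib_mat_vec[of _ n n] smult_mat_vec[of _ n])
  also have "\<dots> = complex_of_real (chebs (Suc (Suc k)) x) \<cdot>\<^sub>v v"
    using Suc M v ev by (auto intro!: eq_vecI simp: mult_mat_vec algebra_simps)
  finally show ?case using Suc by simp
qed

lemma chebm_eigen: assumes M: "M \<in> carrier_mat n n" and v: "v \<in> carrier_vec n"
  and ev: "M *\<^sub>v v = complex_of_real x \<cdot>\<^sub>v v"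
  shows "chebm n k M *\<^sub>v v = complex_of_real (chebs k x) \<cdot>\<^sub>v v"
  using chebm_eigen2[OF assms] by blast

lemma chebm_banded2: assumes M: "M \<in> carrier_mat n n" and b: "banded p M"
  shows "banded (k * p) (chebm n k M) \<and> banded (Suc k * p) (chebm n (Suc k) M)"
proof (induction k)
  case 0
  show ?case using b banded_one by simp
next
  case (Suc k)
  have c1: "chebm n (Suc k) M \<in> carrier_mat n n" "chebm n k M \<in> carrier_mat n n"
    using chebm_carrier[OF M] by auto
  have "banded (p + Suc k * p) (M * chebm n (Suc k) M)"
    by (rule banded_mult[OF M c1(1) b]) (use Suc in auto)
  hence b1: "banded (Suc (Suc k) * p) (2 \<cdot>\<^sub>m (M * chebm n (Suc k) M))"
    by (intro banded_smult) simp
  have b2: "banded (Suc (Suc k) * p) (chebm n k M)"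
    by (rule banded_mono) (use Suc in auto)
  have "banded (Suc (Suc k) * p) (chebm n (Suc (Suc k)) M)"
    using banded_minus[OF _ c1(2) b1 b2] M c1 by simp
  thus ?case using Suc by simp
qed

lemma chebm_banded: assumes M: "M \<in> carrier_mat n n" and b: "banded p M"
  shows "banded (k * p) (chebm n k M)"
  using chebm_banded2[OF assms] by blast

fun msum :: "nat \<Rightarrow> (nat \<Rightarrow> complex mat) \<Rightarrow> nat \<Rightarrow> complex mat" where
  "msum n f 0 = 0\<^sub>m n n"
| "msum n f (Suc K) = msum n f K + f K"

lemma msum_carrier: "(\<And>k. k < K \<Longrightarrow> f k \<in> carrier_mat n n) \<Longrightarrow> msum n f K \<in> carrier_mat n n"
  by (induction K) auto

lemma msum_eigen: assumes "\<And>k. k < K \<Longrightarrow> f k \<in> carrier_mat n n" and v: "v \<in> carrier_vec n"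
  and "\<And>k. k < K \<Longrightarrow> f k *\<^sub>v v = complex_of_real (g k) \<cdot>\<^sub>v v"
  shows "msum n f K *\<^sub>v v = complex_of_real (\<Sum>k<K. g k) \<cdot>\<^sub>v v"
  using assms
proof (induction K)
  case 0
  then show ?case using v by (auto intro!: eq_vecI)
next
  case (Suc K)
  have c: "msum n f K \<in> carrier_mat n n" "f K \<in> carrier_mat n n"
    using Suc.prems by (auto intro!: msum_carrier)
  have "msum n f (Suc K) *\<^sub>v v = msum n f K *\<^sub>v v + f K *\<^sub>v v"
    using c v by (simp add: add_mult_distrib_mat_vec[of _ n n])
  also have "\<dots> = complex_of_real (\<Sum>k<K. g k) \<cdot>\<^sub>v v + complex_of_real (g K) \<cdot>\<^sub>v v"
    using Suc by simp
  also have "\<dots> = complex_of_real (\<Sum>k<Suc K. g k) \<cdot>\<^sub>v v"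
    by (simp add: add_smult_distrib_vec)
  finally show ?case .
qed

lemma msum_banded: assumes "\<And>k. k < K \<Longrightarrow> f k \<in> carrier_mat n n"
  and "\<And>k. k < K \<Longrightarrow> banded p (f k)"
  shows "banded p (msum n f K)"
  using assms
proof (induction K)
  case 0 then show ?case by (simp add: banded_zero)
next
  case (Suc K)
  have c: "msum n f K \<in> carrier_mat n n" "f K \<in> carrier_mat n n"
    using Suc.prems by (auto intro!: msum_carrier)
  show ?case using banded_add[OF c] Suc by simp
qed

definition Mmat :: "real \<Rightarrow> real \<Rightarrow> nat \<Rightarrow> complex mat \<Rightarrow> complex mat" where
  "Mmat a b n H = complex_of_real (-1 / (2 * c0 a b * uu a b)) \<cdot>\<^sub>m (H * H)
     + complex_of_real ((1 + (uu a b)^2) / (2 * uu a b)) \<cdot>\<^sub>m 1\<^sub>m n"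

definition Tmat :: "real \<Rightarrow> real \<Rightarrow> nat \<Rightarrow> complex mat \<Rightarrow> nat \<Rightarrow> complex mat" where
  "Tmat a b n H K = msum n (\<lambda>k. msum n (\<lambda>i. complex_of_real (gam i * gam (k-i) * (uu a b)^k)
      \<cdot>\<^sub>m chebm n (nat \<bar>2 * int i - int k\<bar>) (Mmat a b n H)) (Suc k)) K"

definition Smat :: "real \<Rightarrow> real \<Rightarrow> nat \<Rightarrow> complex mat \<Rightarrow> nat \<Rightarrow> complex mat" where
  "Smat a b n H K = complex_of_real (1 / sqrt (c0 a b)) \<cdot>\<^sub>m (H * Tmat a b n H K)"

lemma Mmat_carrier: "H \<in> carrier_mat n n \<Longrightarrow> Mmat a b n H \<in> carrier_mat n n"
  unfolding Mmat_def by auto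

lemma Tmat_carrier: "H \<in> carrier_mat n n \<Longrightarrow> Tmat a b n H K \<in> carrier_mat n n"
  unfolding Tmat_def by (intro msum_carrier smult_carrier_mat chebm_carrier Mmat_carrier) auto

lemma Smat_carrier: "H \<in> carrier_mat n n \<Longrightarrow> Smat a b n H K \<in> carrier_mat n n"
  unfolding Smat_def using Tmat_carrier[of H n] by auto

lemma Mmat_eigen: assumes ab: "0 < a" "a < b" and H: "H \<in> carrier_mat n n" and v: "v \<in> carrier_vec n"
  and ev: "H *\<^sub>v v = complex_of_real r \<cdot>\<^sub>v v"
  shows "Mmat a b n H *\<^sub>v v = complex_of_real (tt a b r) \<cdot>\<^sub>v v"
proof -
  have u: "uu a b > 0" "c0 a b > 0" using ab by (auto simp: uu_def c0_def)
  have HH: "(H * H) *\<^sub>v v = complex_of_real (r^2) \<cdot>\<^sub>v v"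
    using H v ev by (simp add: mult_mat_vec[of _ n n] power2_eq_square smult_smult_assoc)
  have "Mmat a b n H *\<^sub>v v = complex_of_real (-1 / (2 * c0 a b * uu a b)) \<cdot>\<^sub>v ((H * H) *\<^sub>v v)
     + complex_of_real ((1 + (uu a b)^2) / (2 * uu a b)) \<cdot>\<^sub>v v"
    unfolding Mmat_def using H v
    by (simp add: add_mult_distrib_mat_vec[of _ n n] smult_mat_vec[of _ n])
  also have "\<dots> = complex_of_real (-1 / (2 * c0 a b * uu a b) * r^2 + (1 + (uu a b)^2) / (2 * uu a b)) \<cdot>\<^sub>v v"
    unfolding HH by (rule eq_vecI) (auto simp: algebra_simps)
  also have "-1 / (2 * c0 a b * uu a b) * r^2 + (1 + (uu a b)^2) / (2 * uu a b) = tt a b r"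
    unfolding tt_def using u by (simp add: field_simps)
  finally show ?thesis .
qed

lemma Smat_eigen: assumes ab: "0 < a" "a < b" and H: "H \<in> carrier_mat n n" and v: "v \<in> carrier_vec n"
  and ev: "H *\<^sub>v v = complex_of_real r \<cdot>\<^sub>v v"
  shows "Smat a b n H K *\<^sub>v v = complex_of_real (sapprox a b K r) \<cdot>\<^sub>v v"
proof -
  have M: "Mmat a b n H \<in> carrier_mat n n" using H by (rule Mmat_carrier)
  have Mev: "Mmat a b n H *\<^sub>v v = complex_of_real (tt a b r) \<cdot>\<^sub>v v" by (rule Mmat_eigen[OF ab H v ev])
  have T: "Tmat a b n H K *\<^sub>v v = complex_of_real (\<Sum>k<K. sterm a b r k) \<cdot>\<^sub>v v"
    unfolding Tmat_def
  proof (rule msum_eigen[OF _ v])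
    fix k assume k: "k < K"
    have "msum n (\<lambda>i. complex_of_real (gam i * gam (k-i) * (uu a b)^k)
      \<cdot>\<^sub>m chebm n (nat \<bar>2 * int i - int k\<bar>) (Mmat a b n H)) (Suc k) *\<^sub>v v
      = complex_of_real (\<Sum>i<Suc k. gam i * gam (k-i) * (uu a b)^k * chebs (nat \<bar>2 * int i - int k\<bar>) (tt a b r)) \<cdot>\<^sub>v v"
    proof (rule msum_eigen[OF _ v])
      fix i assume "i < Suc k"
      show "(complex_of_real (gam i * gam (k-i) * (uu a b)^k) \<cdot>\<^sub>m chebm n (nat \<bar>2 * int i - int k\<bar>) (Mmat a b n H)) *\<^sub>v v
         = complex_of_real (gam i * gam (k-i) * (uu a b)^k * chebs (nat \<bar>2 * int i - int k\<bar>) (tt a b r)) \<cdot>\<^sub>v v"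
        using chebm_eigen[OF M v Mev] chebm_carrier[OF M] v
        by (simp add: smult_mat_vec[of _ n] smult_smult_assoc)
    qed (use chebm_carrier[OF M] in auto)
    also have "(\<Sum>i<Suc k. gam i * gam (k-i) * (uu a b)^k * chebs (nat \<bar>2 * int i - int k\<bar>) (tt a b r)) = sterm a b r k"
      unfolding sterm_def by (simp add: lessThan_Suc_atMost)
    finally show "msum n (\<lambda>i. complex_of_real (gam i * gam (k-i) * (uu a b)^k)
      \<cdot>\<^sub>m chebm n (nat \<bar>2 * int i - int k\<bar>) (Mmat a b n H)) (Suc k) *\<^sub>v v
      = complex_of_real (sterm a b r k) \<cdot>\<^sub>v v" .
  qed (use chebm_carrier[OF M] in \<open>auto intro!: msum_carrier\<close>)
  have Tc: "Tmat a b n H K \<in> carrier_mat n n" using H by (rule Tmat_carrier)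
  have "Smat a b n H K *\<^sub>v v = complex_of_real (1 / sqrt (c0 a b)) \<cdot>\<^sub>v (H *\<^sub>v (Tmat a b n H K *\<^sub>v v))"
    unfolding Smat_def using H Tc v by (simp add: smult_mat_vec[of _ n])
  also have "\<dots> = complex_of_real (1 / sqrt (c0 a b) * (r * (\<Sum>k<K. sterm a b r k))) \<cdot>\<^sub>v v"
    unfolding T using H v ev by (simp add: mult_mat_vec[of _ n n] smult_smult_assoc mult_ac)
  also have "1 / sqrt (c0 a b) * (r * (\<Sum>k<K. sterm a b r k)) = sapprox a b K r"
    unfolding sapprox_def by simp
  finally show ?thesis .
qed

lemma Smat_banded: assumes H: "H \<in> carrier_mat n n" and bH: "banded m H" and K: "1 \<le> K"
  shows "banded (2 * m * (K - 1) + m) (Smat a b n H K)"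
proof -
  have M: "Mmat a b n H \<in> carrier_mat n n" using H by (rule Mmat_carrier)
  have bM: "banded (2 * m) (Mmat a b n H)"
  proof -
    have "banded (m + m) (H * H)" by (rule banded_mult[OF H H bH bH])
    hence b1: "banded (2 * m) (complex_of_real (-1 / (2 * c0 a b * uu a b)) \<cdot>\<^sub>m (H * H))"
      by (intro banded_smult) (simp add: mult_2)
    have b2: "banded (2 * m) (complex_of_real ((1 + (uu a b)^2) / (2 * uu a b)) \<cdot>\<^sub>m 1\<^sub>m n)"
      by (intro banded_smult banded_mono[OF banded_one]) simp
    show ?thesis unfolding Mmat_def by (rule banded_add[OF _ _ b1 b2]) (use H in auto)
  qed
  have bT: "banded (2 * m * (K - 1)) (Tmat a b n H K)"
    unfolding Tmat_def
  proof (rule msum_banded)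
    fix k assume k: "k < K"
    show "banded (2 * m * (K - 1)) (msum n (\<lambda>i. complex_of_real (gam i * gam (k-i) * (uu a b)^k)
      \<cdot>\<^sub>m chebm n (nat \<bar>2 * int i - int k\<bar>) (Mmat a b n H)) (Suc k))"
    proof (rule msum_banded)
      fix i assume i: "i < Suc k"
      have "nat \<bar>2 * int i - int k\<bar> \<le> K - 1" using i k by auto
      hence le: "nat \<bar>2 * int i - int k\<bar> * (2 * m) \<le> 2 * m * (K - 1)" by (simp add: mult.commute)
      show "banded (2 * m * (K - 1)) (complex_of_real (gam i * gam (k-i) * (uu a b)^k)
        \<cdot>\<^sub>m chebm n (nat \<bar>2 * int i - int k\<bar>) (Mmat a b n H))"
        by (intro banded_smult banded_mono[OF chebm_banded[OF M bM] le])
    qed (use chebm_carrier[OF M] in auto)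
  qed (use chebm_carrier[OF M] in \<open>auto intro!: msum_carrier\<close>)
  have "banded (m + 2 * m * (K - 1)) (H * Tmat a b n H K)"
    by (rule banded_mult[OF H Tmat_carrier[OF H] bH bT])
  thus ?thesis unfolding Smat_def by (intro banded_smult) (simp add: add.commute)
qed



lemma entry_bound:
  assumes U: "U \<in> carrier_mat n n" "adj U * U = 1\<^sub>m n" and G: "G \<in> carrier_mat n n"
    and Gf: "\<And>k. k < n \<Longrightarrow> G *\<^sub>v col U k = f k \<cdot>\<^sub>v col U k"
    and fb: "\<And>k. k < n \<Longrightarrow> cmod (f k) \<le> \<epsilon>" and ij: "i < n" "j < n"
  shows "cmod (G $$ (i,j)) \<le> \<epsilon>"
proof -
  have aU: "adj U \<in> carrier_mat n n" using U by simp
  have UU': "U * adj U = 1\<^sub>m n" by (rule mat_mult_left_right_inverse[OF aU U(1) U(2)])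
  have eps: "0 \<le> \<epsilon>" using fb[of 0] ij by (meson le_less_trans norm_ge_zero not_less zero_le)
  have GU: "(G * U) $$ (i,k) = f k * U $$ (i,k)" if k: "k < n" for k
  proof -
    have "(G * U) $$ (i,k) = col (G * U) k $ i" using G U ij k by simp
    also have "col (G * U) k = G *\<^sub>v col U k" by (rule col_mult2[OF G U(1) k])
    also have "\<dots> = f k \<cdot>\<^sub>v col U k" by (rule Gf[OF k])
    finally show ?thesis using U ij k by simp
  qed
  have "G = G * (U * adj U)" using UU' G by simp
  also have "\<dots> = (G * U) * adj U" using G U aU by (simp add: assoc_mult_mat[of _ n n _ n _ n])
  finally have "G $$ (i,j) = ((G * U) * adj U) $$ (i,j)" by simp
  also have "\<dots> = (\<Sum>k<n. (G * U) $$ (i,k) * adj U $$ (k,j))"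
    using G U ij by (subst mult_index_sum) auto
  also have "\<dots> = (\<Sum>k<n. f k * (U $$ (i,k) * cnj (U $$ (j,k))))"
    using GU U ij by (intro sum.cong) (auto simp: mult_ac)
  finally have Gij: "G $$ (i,j) = (\<Sum>k<n. f k * (U $$ (i,k) * cnj (U $$ (j,k))))" .
  have rown: "(\<Sum>k<n. (cmod (U $$ (l,k)))^2) = 1" if l: "l < n" for l
  proof -
    have "(U * adj U) $$ (l,l) = (\<Sum>k<n. U $$ (l,k) * adj U $$ (k,l))"
      using U l by (subst mult_index_sum) auto
    also have "\<dots> = (\<Sum>k<n. complex_of_real ((cmod (U $$ (l,k)))^2))"
      using U l by (intro sum.cong) (auto simp: complex_norm_square[symmetric] simp del: of_real_power)
    finally have "complex_of_real (\<Sum>k<n. (cmod (U $$ (l,k)))^2) = 1" using UU' l by simp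
    thus ?thesis using of_real_eq_1_iff by blast
  qed
  have "cmod (G $$ (i,j)) \<le> (\<Sum>k<n. cmod (f k * (U $$ (i,k) * cnj (U $$ (j,k)))))"
    unfolding Gij by (rule norm_sum)
  also have "\<dots> \<le> (\<Sum>k<n. \<epsilon> * (((cmod (U $$ (i,k)))^2 + (cmod (U $$ (j,k)))^2) / 2))"
  proof (rule sum_mono)
    fix k assume k: "k \<in> {..<n}"
    have am: "cmod (U $$ (i,k)) * cmod (U $$ (j,k)) \<le> ((cmod (U $$ (i,k)))^2 + (cmod (U $$ (j,k)))^2) / 2"
      using sum_squares_bound[of "cmod (U $$ (i,k))" "cmod (U $$ (j,k))"]
      by (simp add: power2_eq_square field_simps)
    have "cmod (f k * (U $$ (i,k) * cnj (U $$ (j,k)))) = cmod (f k) * (cmod (U $$ (i,k)) * cmod (U $$ (j,k)))"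
      by (simp add: norm_mult)
    also have "\<dots> \<le> \<epsilon> * (((cmod (U $$ (i,k)))^2 + (cmod (U $$ (j,k)))^2) / 2)"
      using fb[of k] k am eps by (intro mult_mono) auto
    finally show "cmod (f k * (U $$ (i,k) * cnj (U $$ (j,k)))) \<le> \<epsilon> * (((cmod (U $$ (i,k)))^2 + (cmod (U $$ (j,k)))^2) / 2)" .
  qed
  also have "\<dots> = \<epsilon> * (((\<Sum>k<n. (cmod (U $$ (i,k)))^2) + (\<Sum>k<n. (cmod (U $$ (j,k)))^2)) / 2)"
    by (simp add: sum_distrib_left sum.distrib sum_divide_distrib[symmetric] ring_distribs)
  also have "\<dots> = \<epsilon>" using rown ij by simp
  finally show ?thesis .
qed

lemma herm_cscalar: assumes A: "A \<in> carrier_mat n n" and h: "\<And>i j. i < n \<Longrightarrow> j < n \<Longrightarrow> A $$ (i,j) = cnj (A $$ (j,i))"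
  and x: "x \<in> carrier_vec n" and y: "y \<in> carrier_vec n"
  shows "(A *\<^sub>v x) \<bullet>c y = x \<bullet>c (A *\<^sub>v y)"
proof -
  have Ax: "(A *\<^sub>v x) $ i = (\<Sum>j<n. A $$ (i,j) * x $ j)" if "i < n" for i
    using A x that by (subst mult_vec_index_sum) auto
  have Ay: "(A *\<^sub>v y) $ i = (\<Sum>j<n. A $$ (i,j) * y $ j)" if "i < n" for i
    using A y that by (subst mult_vec_index_sum) auto
  have "(A *\<^sub>v x) \<bullet>c y = (\<Sum>i<n. (A *\<^sub>v x) $ i * cnj (y $ i))"
    by (rule cscalar_sum) (use y in simp)
  also have "\<dots> = (\<Sum>i<n. (\<Sum>j<n. A $$ (i,j) * x $ j) * cnj (y $ i))"
    by (rule sum.cong[OF refl]) (simp add: Ax)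
  also have "\<dots> = (\<Sum>i<n. \<Sum>j<n. A $$ (i,j) * x $ j * cnj (y $ i))"
    by (simp add: sum_distrib_right)
  also have "\<dots> = (\<Sum>j<n. \<Sum>i<n. A $$ (i,j) * x $ j * cnj (y $ i))"
    by (rule sum.swap)
  also have "\<dots> = (\<Sum>j<n. x $ j * cnj (\<Sum>i<n. A $$ (j,i) * y $ i))"
  proof (rule sum.cong[OF refl])
    fix j assume j: "j \<in> {..<n}"
    have "(\<Sum>i<n. A $$ (i,j) * x $ j * cnj (y $ i)) = (\<Sum>i<n. x $ j * cnj (A $$ (j,i) * y $ i))"
    proof (rule sum.cong[OF refl])
      fix i assume i: "i \<in> {..<n}"
      have "A $$ (i,j) = cnj (A $$ (j,i))" by (rule h) (use i j in auto)
      thus "A $$ (i,j) * x $ j * cnj (y $ i) = x $ j * cnj (A $$ (j,i) * y $ i)" by simp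
    qed
    thus "(\<Sum>i<n. A $$ (i,j) * x $ j * cnj (y $ i)) = x $ j * cnj (\<Sum>i<n. A $$ (j,i) * y $ i)"
      by (simp add: sum_distrib_left)
  qed
  also have "\<dots> = (\<Sum>j<n. x $ j * cnj ((A *\<^sub>v y) $ j))"
    by (rule sum.cong[OF refl]) (simp add: Ay)
  also have "\<dots> = x \<bullet>c (A *\<^sub>v y)"
    by (rule cscalar_sum[symmetric]) (use A y in simp)
  finally show ?thesis .
qed

lemma proj_fix: assumes P: "neg_spectral_projector n H P" and w: "w \<in> carrier_vec n"
  shows "P *\<^sub>v (P *\<^sub>v w) = P *\<^sub>v w"
proof -
  have Pc: "P \<in> carrier_mat n n" and PP: "P * P = P" using P unfolding neg_spectral_projector_def by blast+
  have "P *\<^sub>v (P *\<^sub>v w) = (P * P) *\<^sub>v w" using Pc w by simp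
  thus ?thesis unfolding PP .
qed

lemma proj_neg: assumes P: "neg_spectral_projector n H P" and H: "H \<in> carrier_mat n n"
  and v: "v \<in> carrier_vec n" "v \<noteq> 0\<^sub>v n" and ev: "H *\<^sub>v v = complex_of_real r \<cdot>\<^sub>v v" and r: "r < 0"
  shows "P *\<^sub>v v = v"
proof -
  interpret vec_module "TYPE(complex)" n .
  let ?S = "{v. \<exists>k. eigenvector H v k \<and> k \<in> \<real> \<and> Re k < 0}"
  have "v \<in> ?S" using ev H v r unfolding eigenvector_def
    by (intro CollectI exI[of _ "complex_of_real r"]) auto
  moreover have "?S \<subseteq> carrier_vec n" using H unfolding eigenvector_def by auto
  ultimately have "v \<in> span ?S" using in_own_span by (meson subsetD)
  hence vN: "v \<in> neg_eigenspace n H" unfolding neg_eigenspace_def .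
  have eq: "neg_eigenspace n H = {P *\<^sub>v w | w. w \<in> carrier_vec n}"
    using P unfolding neg_spectral_projector_def by blast
  have "v \<in> {P *\<^sub>v w | w. w \<in> carrier_vec n}" using vN unfolding eq .
  then obtain w where w: "w \<in> carrier_vec n" "v = P *\<^sub>v w" by auto
  show ?thesis unfolding w(2) by (rule proj_fix[OF P w(1)])
qed

lemma proj_pos: assumes P: "neg_spectral_projector n H P" and Hh: "hermitian_mat n H"
  and v: "v \<in> carrier_vec n" "v \<noteq> 0\<^sub>v n" and ev: "H *\<^sub>v v = complex_of_real r \<cdot>\<^sub>v v" and r: "0 < r"
  shows "P *\<^sub>v v = 0\<^sub>v n"
proof -
  interpret vec_module "TYPE(complex)" n .
  have H: "H \<in> carrier_mat n n" using Hh unfolding hermitian_mat_def by blast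
  have hH: "\<And>i j. i < n \<Longrightarrow> j < n \<Longrightarrow> H $$ (i,j) = cnj (H $$ (j,i))"
    using Hh unfolding hermitian_mat_def by blast
  have Pc: "P \<in> carrier_mat n n" using P unfolding neg_spectral_projector_def by blast
  have hP: "\<And>i j. i < n \<Longrightarrow> j < n \<Longrightarrow> P $$ (i,j) = cnj (P $$ (j,i))"
    using P unfolding neg_spectral_projector_def hermitian_mat_def by blast
  let ?S = "{v. \<exists>k. eigenvector H v k \<and> k \<in> \<real> \<and> Re k < 0}"
  define N where "N = {x \<in> carrier_vec n. x \<bullet>c v = 0}"
  have Nc: "N \<subseteq> carrier_vec n" unfolding N_def by auto
  have subN: "submodule class_ring N V"
  proof (rule submodule.intro)
    show "module class_ring V" by (rule module_axioms)
    show "N \<subseteq> carrier V" using Nc by (simp add: module_vec_def)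
  next
    fix x y assume xy: "x \<in> N" "y \<in> N"
    hence "x + y \<in> N" unfolding N_def using v
      by (auto simp: add_scalar_prod_distrib[of _ n])
    thus "x \<oplus>\<^bsub>V\<^esub> y \<in> N" by (simp add: module_vec_def)
  next
    have "0\<^sub>v n \<in> N" unfolding N_def using v by simp
    thus "\<zero>\<^bsub>V\<^esub> \<in> N" by (simp add: module_vec_def)
  next
    fix c :: complex and x assume "c \<in> carrier class_ring" "x \<in> N"
    hence "c \<cdot>\<^sub>v x \<in> N" unfolding N_def using v by auto
    thus "c \<odot>\<^bsub>V\<^esub> x \<in> N" by (simp add: module_vec_def)
  qed
  have SN: "?S \<subseteq> N"
  proof
    fix x assume "x \<in> ?S"
    then obtain k where x: "x \<in> carrier_vec n" "x \<noteq> 0\<^sub>v n" "H *\<^sub>v x = k \<cdot>\<^sub>v x" "k \<in> \<real>" "Re k < 0"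
      using H unfolding eigenvector_def by auto
    have "k * (x \<bullet>c v) = (H *\<^sub>v x) \<bullet>c v" unfolding x(3) using x v by simp
    also have "\<dots> = x \<bullet>c (H *\<^sub>v v)" by (rule herm_cscalar[OF H hH x(1) v(1)])
    also have "\<dots> = complex_of_real r * (x \<bullet>c v)" unfolding ev using x v
      by (simp add: cscalar_sum[of _ n] sum_distrib_left mult_ac)
    finally have "(k - complex_of_real r) * (x \<bullet>c v) = 0" by (simp add: algebra_simps)
    moreover have "k \<noteq> complex_of_real r" using x r by auto
    ultimately have "x \<bullet>c v = 0" by simp
    thus "x \<in> N" unfolding N_def using x by simp
  qed
  have "span ?S \<subseteq> N" by (rule span_is_subset[OF SN subN])
  hence sN: "neg_eigenspace n H \<subseteq> N" unfolding neg_eigenspace_def .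
  have eq: "neg_eigenspace n H = {P *\<^sub>v w | w. w \<in> carrier_vec n}"
    using P unfolding neg_spectral_projector_def by blast
  have "P *\<^sub>v v \<in> {P *\<^sub>v w | w. w \<in> carrier_vec n}" using v by auto
  hence "P *\<^sub>v v \<in> N" using sN unfolding eq by blast
  hence o: "(P *\<^sub>v v) \<bullet>c v = 0" unfolding N_def by simp
  have Pv: "P *\<^sub>v v \<in> carrier_vec n" using Pc v by simp
  have "(P *\<^sub>v v) \<bullet>c (P *\<^sub>v v) = (P *\<^sub>v (P *\<^sub>v v)) \<bullet>c v"
    by (rule herm_cscalar[OF Pc hP Pv v(1), symmetric])
  also have "\<dots> = 0" unfolding proj_fix[OF P v(1)] by (rule o)
  finally show ?thesis using Pv by simp
qed

lemma per_n:
  assumes ab: "0 < a" "a < b" and m: "1 \<le> m"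
    and Hh: "hermitian_mat n H" and bH: "banded m H"
    and eig: "\<And>k. eigenvalue H k \<Longrightarrow> k \<in> complex_of_real ` ({-b..-a} \<union> {a..b})"
    and P: "neg_spectral_projector n H P"
    and E: "\<And>K r. a \<le> \<bar>r\<bar> \<Longrightarrow> \<bar>r\<bar> \<le> b \<Longrightarrow> \<bar>sgn r - sapprox a b K r\<bar> \<le> E * (1/\<xi>)^K"
    and ij: "i < n" "j < n"
    and K: "K = 0 \<or> real (2 * m * K) \<le> \<bar>real i - real j\<bar>"
  shows "cmod (P $$ (i,j)) \<le> (if i = j then 1/2 else 0) + E * (1/\<xi>)^K / 2"
proof -
  have H: "H \<in> carrier_mat n n" using Hh unfolding hermitian_mat_def by blast
  have hH: "\<And>i j. i < n \<Longrightarrow> j < n \<Longrightarrow> H $$ (i,j) = cnj (H $$ (j,i))"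
    using Hh unfolding hermitian_mat_def by blast
  have Pc: "P \<in> carrier_mat n n" using P unfolding neg_spectral_projector_def by blast
  have aH: "adj H = H"
  proof (rule eq_matI)
    fix i j assume "i < dim_row H" "j < dim_col H"
    hence ij': "i < n" "j < n" using H by auto
    have "H $$ (j,i) = cnj (H $$ (i,j))" by (rule hH) (use ij' in auto)
    thus "adj H $$ (i,j) = H $$ (i,j)" using ij' H by simp
  qed (use H in auto)
  obtain U where U: "U \<in> carrier_mat n n" "adj U * U = 1\<^sub>m n"
    and Ue: "\<forall>k<n. \<exists>\<mu>. H *\<^sub>v col U k = \<mu> \<cdot>\<^sub>v col U k"
    using spectral[OF H aH] by blast
  have colc: "col U k \<in> carrier_vec n" for k using col_dim[of U k] U(1) by simp
  have colnz: "col U k \<noteq> 0\<^sub>v n" if k: "k < n" for k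
  proof
    assume z: "col U k = 0\<^sub>v n"
    have "(\<Sum>r<n. cnj (U $$ (r,k)) * U $$ (r,k)) = 1"
      using unitary_sum[OF U k k] by simp
    moreover have "(\<Sum>r<n. cnj (U $$ (r,k)) * U $$ (r,k)) = 0"
    proof (rule sum.neutral, intro ballI)
      fix r assume r: "r \<in> {..<n}"
      have "U $$ (r,k) = col U k $ r" using U(1) k r by simp
      also have "\<dots> = 0" using z r by simp
      finally show "cnj (U $$ (r,k)) * U $$ (r,k) = 0" by simp
    qed
    ultimately show False by simp
  qed
  have rex: "\<exists>r. H *\<^sub>v col U k = complex_of_real r \<cdot>\<^sub>v col U k \<and> a \<le> \<bar>r\<bar> \<and> \<bar>r\<bar> \<le> b" if k: "k < n" for k
  proof -
    obtain \<mu> where mu: "H *\<^sub>v col U k = \<mu> \<cdot>\<^sub>v col U k" using Ue k by blast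
    have "eigenvalue H \<mu>" unfolding eigenvalue_def eigenvector_def
      using mu colnz[OF k] colc[of k] H by auto
    from eig[OF this] obtain r where r: "\<mu> = complex_of_real r" "r \<in> {-b..-a} \<union> {a..b}" by auto
    show ?thesis using mu r ab by (intro exI[of _ r]) auto
  qed
  define rr where "rr k = (SOME r. H *\<^sub>v col U k = complex_of_real r \<cdot>\<^sub>v col U k \<and> a \<le> \<bar>r\<bar> \<and> \<bar>r\<bar> \<le> b)" for k
  have rr: "H *\<^sub>v col U k = complex_of_real (rr k) \<cdot>\<^sub>v col U k" "a \<le> \<bar>rr k\<bar>" "\<bar>rr k\<bar> \<le> b"
    if k: "k < n" for k
    using someI_ex[OF rex[OF k]] unfolding rr_def by blast+
  define S where "S = Smat a b n H K"
  have Sc: "S \<in> carrier_mat n n" unfolding S_def by (rule Smat_carrier[OF H])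
  define G where "G = 1\<^sub>m n - 2 \<cdot>\<^sub>m P - S"
  have Gc: "G \<in> carrier_mat n n" unfolding G_def using Pc Sc by auto
  have Gev: "G *\<^sub>v col U k = complex_of_real (sgn (rr k) - sapprox a b K (rr k)) \<cdot>\<^sub>v col U k"
    if k: "k < n" for k
  proof -
    let ?c = "col U k"
    have Sev: "S *\<^sub>v ?c = complex_of_real (sapprox a b K (rr k)) \<cdot>\<^sub>v ?c"
      unfolding S_def by (rule Smat_eigen[OF ab H colc rr(1)[OF k]])
    have c1: "1\<^sub>m n - 2 \<cdot>\<^sub>m P \<in> carrier_mat n n" by (intro minus_carrier_mat smult_carrier_mat Pc)
    have c2: "2 \<cdot>\<^sub>m P \<in> carrier_mat n n" using Pc by simp
    have "G *\<^sub>v ?c = (1\<^sub>m n - 2 \<cdot>\<^sub>m P) *\<^sub>v ?c - S *\<^sub>v ?c"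
      unfolding G_def by (rule minus_mult_distrib_mat_vec[OF c1 Sc colc])
    also have "(1\<^sub>m n - 2 \<cdot>\<^sub>m P) *\<^sub>v ?c = 1\<^sub>m n *\<^sub>v ?c - (2 \<cdot>\<^sub>m P) *\<^sub>v ?c"
      by (rule minus_mult_distrib_mat_vec[OF one_carrier_mat c2 colc])
    also have "(2 \<cdot>\<^sub>m P) *\<^sub>v ?c = 2 \<cdot>\<^sub>v (P *\<^sub>v ?c)" by (rule smult_mat_vec[OF Pc colc])
    also have "1\<^sub>m n *\<^sub>v ?c = ?c" using colc[of k] by simp
    finally have "G *\<^sub>v ?c = ?c - 2 \<cdot>\<^sub>v (P *\<^sub>v ?c) - S *\<^sub>v ?c" .
    also have "\<dots> = complex_of_real (sgn (rr k) - sapprox a b K (rr k)) \<cdot>\<^sub>v ?c"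
    proof (cases "rr k < 0")
      case True
      have "P *\<^sub>v ?c = ?c" by (rule proj_neg[OF P H colc colnz[OF k] rr(1)[OF k] True])
      thus ?thesis unfolding Sev using True colc[of k] by (auto intro!: eq_vecI simp: algebra_simps)
    next
      case False
      hence pos: "0 < rr k" using rr(2)[OF k] ab by auto
      have "P *\<^sub>v ?c = 0\<^sub>v n" by (rule proj_pos[OF P Hh colc colnz[OF k] rr(1)[OF k] pos])
      thus ?thesis unfolding Sev using pos colc[of k] U(1) by (auto intro!: eq_vecI simp: algebra_simps)
    qed
    finally show ?thesis .
  qed
  have Gb: "cmod (G $$ (i,j)) \<le> E * (1/\<xi>)^K"
  proof (rule entry_bound[OF U Gc Gev _ ij])
    fix k assume k: "k < n"
    show "cmod (complex_of_real (sgn (rr k) - sapprox a b K (rr k))) \<le> E * (1/\<xi>)^K"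
      unfolding norm_of_real using E[OF rr(2,3)[OF k], of K] .
  qed
  have S0: "S $$ (i,j) = 0"
  proof (cases "K = 0")
    case True
    have "S = complex_of_real (1 / sqrt (c0 a b)) \<cdot>\<^sub>m (H * 0\<^sub>m n n)"
      unfolding S_def Smat_def Tmat_def True by simp
    thus ?thesis using ij H by simp
  next
    case False
    hence K1: "1 \<le> K" and d: "real (2 * m * K) \<le> \<bar>real i - real j\<bar>" using K by auto
    have "real (2 * m * (K - 1) + m) < \<bar>real i - real j\<bar>"
    proof -
      have "2 * m * (K - 1) + m < 2 * m * K" using K1 m
        by (cases K) (auto simp: algebra_simps)
      hence "real (2 * m * (K - 1) + m) < real (2 * m * K)" by linarith
      thus ?thesis using d by linarith
    qed
    thus ?thesis using banded_D[OF Smat_banded[OF H bH K1]] ij Sc unfolding S_def by auto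
  qed
  have Gij: "G $$ (i,j) = (if i = j then 1 else 0) - 2 * P $$ (i,j) - S $$ (i,j)"
    unfolding G_def using ij Pc Sc by simp
  hence e: "P $$ (i,j) = ((if i = j then 1 else 0) - G $$ (i,j)) / 2" using S0 by simp
  have "cmod (P $$ (i,j)) = cmod ((if i = j then 1 else 0) - G $$ (i,j)) / 2"
    unfolding e by (simp only: norm_divide) simp
  also have "\<dots> \<le> (cmod (if i = j then 1 else 0 :: complex) + cmod (G $$ (i,j))) / 2"
    by (intro divide_right_mono norm_triangle_ineq4) auto
  also have "\<dots> \<le> (if i = j then 1/2 else 0) + E * (1/\<xi>)^K / 2"
    using Gb by auto
  finally show ?thesis .
qed

theorem mainTheorem12:
  fixes a b \<xi> :: real and m :: nat
    and H P :: "nat \<Rightarrow> complex mat"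
  assumes "0 < a" and "a < b" and "1 \<le> m"
    and "\<And>n. hermitian_mat n (H n)"
    and "\<And>n. banded m (H n)"
    and "\<And>n k. eigenvalue (H n) k \<Longrightarrow> k \<in> complex_of_real ` ({-b..-a} \<union> {a..b})"
    and "\<And>n. neg_spectral_projector n (H n) (P n)"
    and "1 < \<xi>" and "\<xi> < (b + a) / (b - a)"
  shows "\<exists>C>0. \<forall>n i j. i < n \<longrightarrow> j < n \<longrightarrow>
           cmod (P n $$ (i,j)) \<le> C * \<xi> powr (- \<bar>real i - real j\<bar> / (2 * real m))"
proof -
  note ab = assms(1,2) and m = assms(3) and xi = assms(8,9)
  obtain E where E: "\<And>K r. a \<le> \<bar>r\<bar> \<Longrightarrow> \<bar>r\<bar> \<le> b \<Longrightarrow> \<bar>sgn r - sapprox a b K r\<bar> \<le> E * (1 / \<xi>)^K"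
    using sapprox_bound[OF ab xi] by blast
  define E' where "E' = max E 0"
  define C where "C = 1/2 + E' * \<xi> / 2"
  have E'0: "0 \<le> E'" unfolding E'_def by simp
  have C0: "C > 0" unfolding C_def using E'0 xi by (simp add: add_pos_nonneg)
  show ?thesis
  proof (intro exI[of _ C] conjI C0 allI impI)
    fix n i j :: nat assume ij: "i < n" "j < n"
    define x where "x = \<bar>real i - real j\<bar>"
    define K where "K = nat \<lfloor>x / (2 * real m)\<rfloor>"
    have x0: "0 \<le> x" unfolding x_def by simp
    have mpos: "0 < 2 * real m" using m by simp
    have Kle: "real K \<le> x / (2 * real m)" unfolding K_def using x0 mpos by simp
    have Kge: "x / (2 * real m) < real K + 1" unfolding K_def using x0 mpos by linarith
    have Kcond: "K = 0 \<or> real (2 * m * K) \<le> \<bar>real i - real j\<bar>"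
    proof -
      have "real K * (2 * real m) \<le> x" using Kle mpos by (simp add: field_simps)
      thus ?thesis unfolding x_def by (simp add: mult_ac)
    qed
    have pn: "cmod (P n $$ (i,j)) \<le> (if i = j then 1/2 else 0) + E * (1/\<xi>)^K / 2"
      by (rule per_n[OF ab m assms(4) assms(5) assms(6) assms(7) E ij Kcond])
    define w where "w = \<xi> powr (- x / (2 * real m))"
    have w0: "0 < w" unfolding w_def using xi by simp
    have w1: "w \<le> 1"
    proof -
      have "\<xi> powr (- x / (2 * real m)) \<le> \<xi> powr 0"
        using xi x0 mpos by (intro powr_mono) (auto simp: divide_nonneg_pos)
      thus ?thesis unfolding w_def using xi by simp
    qed
    have t1: "(if i = j then 1/2 else 0) \<le> 1/2 * w"
    proof (cases "i = j")
      case True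
      hence "x = 0" unfolding x_def by simp
      thus ?thesis using True xi unfolding w_def by simp
    qed (use w0 in simp)
    have t2: "E * (1/\<xi>)^K / 2 \<le> E' * \<xi> / 2 * w"
    proof -
      have "(1/\<xi>)^K = \<xi> powr (- real K)" using xi
        by (simp add: powr_minus powr_realpow divide_inverse power_inverse)
      also have "\<dots> \<le> \<xi> powr (1 + (- x / (2 * real m)))"
        using xi Kge by (intro powr_mono) (auto simp: field_simps)
      also have "\<dots> = \<xi> * w" unfolding w_def by (subst powr_add) (use xi in simp)
      finally have pk: "(1/\<xi>)^K \<le> \<xi> * w" .
      have "E * (1/\<xi>)^K \<le> E' * (1/\<xi>)^K" unfolding E'_def
        by (intro mult_right_mono) (use xi in auto)
      also have "\<dots> \<le> E' * (\<xi> * w)" by (intro mult_left_mono pk E'0)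
      finally show ?thesis by simp
    qed
    have "cmod (P n $$ (i,j)) \<le> C * w" using pn t1 t2 unfolding C_def by (simp add: algebra_simps)
    thus "cmod (P n $$ (i,j)) \<le> C * \<xi> powr (- \<bar>real i - real j\<bar> / (2 * real m))"
      unfolding w_def x_def .
  qed
qed


end
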